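(* Let $G$ be a finite abelian group and $A$ a finite dimensional $G$-graded algebra with a regular grading with bicharacter $\beta$ whose regular decomposition is minimal, and assume $A_0$ is a local algebra. If $J(A_0)\neq0$, then there exist a commutative local subalgebra $\mathscr{U}$ of $A$ (namely $\mathscr U=K+J(A_0)$) and a 2-cocycle $\alpha\in H^2(G,K^* )$ inducing $\beta$ such that $A\cong K^\alpha G\otimes\mathscr{U}$ as $G$-graded algebras, where $\mathscr U$ carries the trivial grading. If $J(A_0)=0$, then $A\cong K^\alpha G$ as $G$-graded algebras.
   Context: All algebras are associative with unit over an algebraically closed field $K$ of characteristic $0$; $G$ finite abelian, written additively, neutral element $0$. A $G$-graded algebra $A$ has a regular grading if (i) for every $n$ and every $(g_1,\dots,g_n)\in G^n$ there exist $a_i\in A_{g_i}$ with $a_1\cdots a_n\ne0$, and (ii) there is $\beta\colon G\times G\to K^*$ with $a_ga_h=\beta(g,h)a_ha_g$ for all homogeneous $a_g,a_h$ ($\beta$ = bicharacter). The regular decomposition is minimal if there do not exist $g\neq h$ with $\beta(x,g)=\beta(x,h)$ for all $x\in G$. A commutative algebra $S$ is local if $S/J(S)\cong K$, $J$ the Jacobson radical. For a 2-cocycle $\alpha$, $K^\alpha G$ has basis $\{X_g\}$ with $X_gX_h=\alpha(g,h)X_{g+h}$, graded by $(K^\alpha G)_g=KX_g$; $\alpha$ induces $\beta$ if $\beta(g,h)=\alpha(g,h)\alpha(h,g)^{-1}$. Trivial grading: $V_0=V$, $V_g=0$ for $g\ne0$; tensor products are graded by $(V\otimes W)_g=\bigoplus_{h+k=g}V_h\otimes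 W_k$. *)

theory Defs
  imports "HOL-Computational_Algebra.Polynomial"
begin

definition alg_closed :: "'k::field itself \<Rightarrow> bool" where
  "alg_closed TYPE('k) \<longleftrightarrow>
     (\<forall>p :: 'k poly. degree p \<ge> 1 \<longrightarrow> (\<exists>x. poly p x = 0))"

(* ---------- finite dimensional associative unital K-algebras ----------
   The algebra A is the whole type 'a (a ring with 1) together with a
   scalar multiplication  scale :: 'k \<Rightarrow> 'a \<Rightarrow> 'a  making it a K-algebra. *)

definition is_algebra :: "('k::field \<Rightarrow> 'a::ring_1 \<Rightarrow> 'a) \<Rightarrow> bool" where
  "is_algebra scale \<longleftrightarrow> vector_space scale \<and>
     (\<forall>c x y. scale c (x * y) = scale c x * y \<and> scale c (x * y) = x * scale c y)"

definition fin_dim_algebra :: "('k::field \<Rightarrow> 'a::ring_1 \<Rightarrow> 'a) \<Rightarrow> bool" where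
  "fin_dim_algebra scale \<longleftrightarrow> is_algebra scale \<and>
     (\<exists>B. finite B \<and> module.span scale B = UNIV)"

definition subalgebra :: "('k::field \<Rightarrow> 'a::ring_1 \<Rightarrow> 'a) \<Rightarrow> 'a set \<Rightarrow> bool" where
  "subalgebra scale S \<longleftrightarrow> module.subspace scale S \<and> 1 \<in> S \<and>
     (\<forall>x\<in>S. \<forall>y\<in>S. x * y \<in> S)"

definition commutative_set :: "'a::ring_1 set \<Rightarrow> bool" where
  "commutative_set S \<longleftrightarrow> (\<forall>x\<in>S. \<forall>y\<in>S. x * y = y * x)"

definition left_ideal_in :: "'a::ring_1 set \<Rightarrow> 'a set \<Rightarrow> bool" where
  "left_ideal_in S I \<longleftrightarrow> I \<subseteq> S \<and> 0 \<in> I \<and>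
     (\<forall>x\<in>I. \<forall>y\<in>I. x + y \<in> I) \<and> (\<forall>x\<in>I. - x \<in> I) \<and>
     (\<forall>s\<in>S. \<forall>x\<in>I. s * x \<in> I)"

definition maximal_left_ideal_in :: "'a::ring_1 set \<Rightarrow> 'a set \<Rightarrow> bool" where
  "maximal_left_ideal_in S I \<longleftrightarrow> left_ideal_in S I \<and> I \<noteq> S \<and>
     (\<forall>I'. left_ideal_in S I' \<and> I \<subseteq> I' \<longrightarrow> I' = I \<or> I' = S)"

definition jacobson :: "'a::ring_1 set \<Rightarrow> 'a set" where
  "jacobson S = S \<inter> \<Inter> {I. maximal_left_ideal_in S I}"

(* S local:  S / J(S) \<cong> K as K-algebras, i.e. (first isomorphism theorem)
   there is a surjective unital K-algebra homomorphism S \<rightarrow> K with kernel J(S). *)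
definition local_alg :: "('k::field \<Rightarrow> 'a::ring_1 \<Rightarrow> 'a) \<Rightarrow> 'a set \<Rightarrow> bool" where
  "local_alg scale S \<longleftrightarrow> (\<exists>\<psi> :: 'a \<Rightarrow> 'k.
     \<psi> ` S = UNIV \<and> \<psi> 1 = 1 \<and>
     (\<forall>x\<in>S. \<forall>y\<in>S. \<psi> (x + y) = \<psi> x + \<psi> y \<and> \<psi> (x * y) = \<psi> x * \<psi> y) \<and>
     (\<forall>c. \<forall>x\<in>S. \<psi> (scale c x) = c * \<psi> x) \<and>
     {x\<in>S. \<psi> x = 0} = jacobson S)"

definition graded_algebra ::
  "('k::field \<Rightarrow> 'a::ring_1 \<Rightarrow> 'a) \<Rightarrow> ('g::{finite,ab_group_add} \<Rightarrow> 'a set) \<Rightarrow> bool" where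
  "graded_algebra scale V \<longleftrightarrow> is_algebra scale \<and>
     (\<forall>g. module.subspace scale (V g)) \<and>
     (\<forall>a. \<exists>!c :: 'g \<Rightarrow> 'a. (\<forall>g. c g \<in> V g) \<and> a = (\<Sum>g\<in>UNIV. c g)) \<and>
     (\<forall>g h. \<forall>x\<in>V g. \<forall>y\<in>V h. x * y \<in> V (g + h))"

definition regular_grading ::
  "('k::field \<Rightarrow> 'a::ring_1 \<Rightarrow> 'a) \<Rightarrow> ('g::{finite,ab_group_add} \<Rightarrow> 'a set)
     \<Rightarrow> ('g \<Rightarrow> 'g \<Rightarrow> 'k) \<Rightarrow> bool" where
  "regular_grading scale V \<beta> \<longleftrightarrow> graded_algebra scale V \<and>
     (\<forall>gs :: 'g list. gs \<noteq> [] \<longrightarrow> (\<exists>as :: 'a list. length as = length gs \<and>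
         (\<forall>i<length gs. as ! i \<in> V (gs ! i)) \<and> prod_list as \<noteq> 0)) \<and>
     (\<forall>g h. \<beta> g h \<noteq> 0) \<and>
     (\<forall>g h. \<forall>x\<in>V g. \<forall>y\<in>V h. x * y = scale (\<beta> g h) (y * x))"

definition minimal_decomposition :: "('g \<Rightarrow> 'g \<Rightarrow> 'k) \<Rightarrow> bool" where
  "minimal_decomposition \<beta> \<longleftrightarrow> \<not> (\<exists>g h. g \<noteq> h \<and> (\<forall>x. \<beta> x g = \<beta> x h))"

definition two_cocycle :: "('g::ab_group_add \<Rightarrow> 'g \<Rightarrow> 'k::field) \<Rightarrow> bool" where
  "two_cocycle \<alpha> \<longleftrightarrow> (\<forall>g h. \<alpha> g h \<noteq> 0) \<and>
     (\<forall>g h k. \<alpha> g h * \<alpha> (g + h) k = \<alpha> h k * \<alpha> g (h + k))"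

definition induces :: "('g \<Rightarrow> 'g \<Rightarrow> 'k::field) \<Rightarrow> ('g \<Rightarrow> 'g \<Rightarrow> 'k) \<Rightarrow> bool" where
  "induces \<alpha> \<beta> \<longleftrightarrow> (\<forall>g h. \<beta> g h = \<alpha> g h / \<alpha> h g)"

(* ---------- twisted group algebra K^\<alpha>G ----------
   An element  \<Sum>_g f(g) X_g  is represented by its coefficient function f :: 'g \<Rightarrow> 'k;
   X_g X_h = \<alpha>(g,h) X_{g+h}.  Its unit is \<alpha>(0,0)^{-1} X_0.  (K^\<alpha>G)_g = K X_g. *)

definition tga_mult :: "('g::{finite,ab_group_add} \<Rightarrow> 'g \<Rightarrow> 'k::field)
     \<Rightarrow> ('g \<Rightarrow> 'k) \<Rightarrow> ('g \<Rightarrow> 'k) \<Rightarrow> ('g \<Rightarrow> 'k)" where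
  "tga_mult \<alpha> f f' = (\<lambda>k. \<Sum>g\<in>UNIV. \<alpha> g (k - g) * f g * f' (k - g))"

definition tga_one :: "('g::ab_group_add \<Rightarrow> 'g \<Rightarrow> 'k::field) \<Rightarrow> ('g \<Rightarrow> 'k)" where
  "tga_one \<alpha> = (\<lambda>g. if g = 0 then inverse (\<alpha> 0 0) else 0)"

definition graded_iso_tga ::
  "('k::field \<Rightarrow> 'a::ring_1 \<Rightarrow> 'a) \<Rightarrow> ('g::{finite,ab_group_add} \<Rightarrow> 'a set)
     \<Rightarrow> ('g \<Rightarrow> 'g \<Rightarrow> 'k) \<Rightarrow> (('g \<Rightarrow> 'k) \<Rightarrow> 'a) \<Rightarrow> bool" where
  "graded_iso_tga scale V \<alpha> \<phi> \<longleftrightarrow> bij \<phi> \<and>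
     (\<forall>f f'. \<phi> (\<lambda>g. f g + f' g) = \<phi> f + \<phi> f') \<and>
     (\<forall>c f. \<phi> (\<lambda>g. c * f g) = scale c (\<phi> f)) \<and>
     (\<forall>f f'. \<phi> (tga_mult \<alpha> f f') = \<phi> f * \<phi> f') \<and>
     \<phi> (tga_one \<alpha>) = 1 \<and>
     (\<forall>g. \<phi> ` {f. \<forall>h. h \<noteq> g \<longrightarrow> f h = 0} = V g)"

(* ---------- K^\<alpha>G \<otimes> U  for a subalgebra U \<subseteq> A with the trivial grading ----------
   Since {X_g} is a basis of K^\<alpha>G, every element of K^\<alpha>G \<otimes> U is uniquely
   \<Sum>_g X_g \<otimes> u_g; it is represented by u :: 'g \<Rightarrow> 'a with all u g \<in> U.
   (X_g \<otimes> u)(X_h \<otimes> v) = \<alpha>(g,h) X_{g+h} \<otimes> uv, unit \<alpha>(0,0)^{-1} X_0 \<otimes> 1,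
   and (K^\<alpha>G \<otimes> U)_g = X_g \<otimes> U  (because U is concentrated in degree 0). *)

definition tt_carrier :: "'a set \<Rightarrow> ('g \<Rightarrow> 'a) set" where
  "tt_carrier U = {u. \<forall>g. u g \<in> U}"

definition tt_mult :: "('k::field \<Rightarrow> 'a::ring_1 \<Rightarrow> 'a)
     \<Rightarrow> ('g::{finite,ab_group_add} \<Rightarrow> 'g \<Rightarrow> 'k) \<Rightarrow> ('g \<Rightarrow> 'a) \<Rightarrow> ('g \<Rightarrow> 'a) \<Rightarrow> ('g \<Rightarrow> 'a)" where
  "tt_mult scale \<alpha> u v = (\<lambda>k. \<Sum>g\<in>UNIV. scale (\<alpha> g (k - g)) (u g * v (k - g)))"

definition tt_one :: "('k::field \<Rightarrow> 'a::ring_1 \<Rightarrow> 'a)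
     \<Rightarrow> ('g::ab_group_add \<Rightarrow> 'g \<Rightarrow> 'k) \<Rightarrow> ('g \<Rightarrow> 'a)" where
  "tt_one scale \<alpha> = (\<lambda>g. if g = 0 then scale (inverse (\<alpha> 0 0)) 1 else 0)"

definition graded_iso_tt ::
  "('k::field \<Rightarrow> 'a::ring_1 \<Rightarrow> 'a) \<Rightarrow> ('g::{finite,ab_group_add} \<Rightarrow> 'a set)
     \<Rightarrow> ('g \<Rightarrow> 'g \<Rightarrow> 'k) \<Rightarrow> 'a set \<Rightarrow> (('g \<Rightarrow> 'a) \<Rightarrow> 'a) \<Rightarrow> bool" where
  "graded_iso_tt scale V \<alpha> U \<phi> \<longleftrightarrow> bij_betw \<phi> (tt_carrier U) UNIV \<and>
     (\<forall>u\<in>tt_carrier U. \<forall>v\<in>tt_carrier U. \<phi> (\<lambda>g. u g + v g) = \<phi> u + \<phi> v) \<and>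
     (\<forall>c. \<forall>u\<in>tt_carrier U. \<phi> (\<lambda>g. scale c (u g)) = scale c (\<phi> u)) \<and>
     (\<forall>u\<in>tt_carrier U. \<forall>v\<in>tt_carrier U. \<phi> (tt_mult scale \<alpha> u v) = \<phi> u * \<phi> v) \<and>
     \<phi> (tt_one scale \<alpha>) = 1 \<and>
     (\<forall>g. \<phi> ` {u\<in>tt_carrier U. \<forall>h. h \<noteq> g \<longrightarrow> u h = 0} = V g)"

end

theory Submission
  imports Defs "HOL-Algebra.FiniteProduct" "HOL-Computational_Algebra.Formal_Power_Series"
begin

locale GA =
  fixes scale :: "'k::field_char_0 \<Rightarrow> 'a::ring_1 \<Rightarrow> 'a"
    and V :: "'g::{finite,ab_group_add} \<Rightarrow> 'a set"
    and \<beta> :: "'g \<Rightarrow> 'g \<Rightarrow> 'k"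
    and \<psi> :: "'a \<Rightarrow> 'k"
    and B :: "'a set"
  assumes vs: "vector_space scale"
  and sc_multL: "\<And>c x y. scale c (x * y) = scale c x * y"
  and sc_multR: "\<And>c x y. scale c (x * y) = x * scale c y"
  and finB: "finite B" and spanB: "module.span scale B = UNIV"
  and subV: "\<And>g. module.subspace scale (V g)"
  and decomp: "\<And>a. \<exists>!c. (\<forall>g. c g \<in> V g) \<and> a = (\<Sum>g\<in>UNIV. c g)"
  and Vmult: "\<And>g h x y. x \<in> V g \<Longrightarrow> y \<in> V h \<Longrightarrow> x * y \<in> V (g + h)"
  and reg: "\<And>gs. gs \<noteq> [] \<Longrightarrow> \<exists>as. length as = length gs \<and>
         (\<forall>i<length gs. as ! i \<in> V (gs ! i)) \<and> prod_list as \<noteq> 0"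
  and Vcomm: "\<And>g h x y. x \<in> V g \<Longrightarrow> y \<in> V h \<Longrightarrow> x * y = scale (\<beta> g h) (y * x)"
  and psi_add: "\<And>x y. x \<in> V 0 \<Longrightarrow> y \<in> V 0 \<Longrightarrow> \<psi> (x + y) = \<psi> x + \<psi> y"
  and psi_mult: "\<And>x y. x \<in> V 0 \<Longrightarrow> y \<in> V 0 \<Longrightarrow> \<psi> (x * y) = \<psi> x * \<psi> y"
  and psi_scale: "\<And>c x. x \<in> V 0 \<Longrightarrow> \<psi> (scale c x) = c * \<psi> x"
  and psi_one: "\<psi> 1 = 1"
  and psi_ker: "{x \<in> V 0. \<psi> x = 0} = jacobson (V 0)"
begin

sublocale vector_space scale by (rule vs)

lemma V_zero[simp]: "0 \<in> V g" using subV subspace_0 by blast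
lemma V_add: "x \<in> V g \<Longrightarrow> y \<in> V g \<Longrightarrow> x + y \<in> V g" using subV subspace_add by blast
lemma V_scale: "x \<in> V g \<Longrightarrow> scale c x \<in> V g" using subV subspace_scale by blast
lemma V_neg: "x \<in> V g \<Longrightarrow> - x \<in> V g" using subV subspace_neg by blast
lemma V_diff: "x \<in> V g \<Longrightarrow> y \<in> V g \<Longrightarrow> x - y \<in> V g" using subV subspace_diff by blast
lemma V_sum: "(\<And>i. i \<in> I \<Longrightarrow> f i \<in> V g) \<Longrightarrow> sum f I \<in> V g" using subV subspace_sum by blast

definition comp :: "'a \<Rightarrow> 'g \<Rightarrow> 'a" where
  "comp a = (THE c. (\<forall>g. c g \<in> V g) \<and> a = (\<Sum>g\<in>UNIV. c g))"

lemma comp_prop: "(\<forall>g. comp a g \<in> V g) \<and> a = (\<Sum>g\<in>UNIV. comp a g)"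
  unfolding comp_def by (rule theI'[OF decomp])

lemma comp_in: "comp a g \<in> V g" using comp_prop by blast
lemma comp_sum: "(\<Sum>g\<in>UNIV. comp a g) = a" using comp_prop by metis

lemma comp_unique: "(\<And>g. c g \<in> V g) \<Longrightarrow> a = (\<Sum>g\<in>UNIV. c g) \<Longrightarrow> comp a = c"
  using decomp[of a] comp_prop[of a] by blast

lemma comp_hom: "x \<in> V h \<Longrightarrow> comp x = (\<lambda>g. if g = h then x else 0)"
  by (rule comp_unique) auto

lemma comp_add: "comp (a + b) = (\<lambda>g. comp a g + comp b g)"
  by (rule comp_unique) (auto simp: V_add comp_in sum.distrib comp_sum)

lemma comp_scale: "comp (scale c a) = (\<lambda>g. scale c (comp a g))"
  by (rule comp_unique) (auto simp: V_scale comp_in scale_sum_right[symmetric] comp_sum)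

lemma V_inter: "x \<in> V g \<Longrightarrow> x \<in> V h \<Longrightarrow> g \<noteq> h \<Longrightarrow> x = 0"
  using comp_hom[of x g] comp_hom[of x h] by metis

lemma V_nonzero: "\<exists>x\<in>V g. x \<noteq> 0"
proof -
  obtain as where "length as = 1" "as ! 0 \<in> V g" "prod_list as \<noteq> 0"
    using reg[of "[g]"] by auto
  then show ?thesis by (cases as) auto
qed

lemma one_V0: "(1::'a) \<in> V 0"
proof -
  define e where "e = comp 1"
  have hom: "e 0 * x = x" if x: "x \<in> V h" for x h
  proof -
    define c where "c k = e (k - h) * x" for k
    have cV: "c k \<in> V k" for k
      using Vmult[OF comp_in[of 1 "k - h"] x] by (simp add: c_def e_def)
    have "(\<Sum>k\<in>UNIV. c k) = (\<Sum>g\<in>UNIV. e g * x)"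
    proof -
      have "(\<Sum>g\<in>UNIV. e g * x) = (\<Sum>k\<in>UNIV. e (k - h) * x)"
        by (rule sum.reindex_bij_witness[of _ "\<lambda>k. k - h" "\<lambda>g. g + h"]) auto
      then show ?thesis by (simp add: c_def)
    qed
    also have "\<dots> = (\<Sum>g\<in>UNIV. e g) * x" by (simp add: sum_distrib_right)
    also have "\<dots> = x" by (simp add: e_def comp_sum)
    finally have "comp x = c" using cV by (intro comp_unique) auto
    then have "c h = x" using comp_hom[OF x] by metis
    then show ?thesis by (simp add: c_def)
  qed
  have all: "e 0 * a = a" for a
  proof -
    have "e 0 * a = (\<Sum>g\<in>UNIV. e 0 * comp a g)"
      by (subst comp_sum[of a, symmetric]) (simp add: sum_distrib_left)
    also have "\<dots> = (\<Sum>g\<in>UNIV. comp a g)" using hom[OF comp_in] by simp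
    finally show ?thesis by (simp add: comp_sum)
  qed
  have "e 0 = 1" using all[of 1] by simp
  then show ?thesis using comp_in[of 1 0] by (simp add: e_def)
qed

lemma beta_g0: "\<beta> g 0 = 1"
proof -
  obtain x where x: "x \<in> V g" "x \<noteq> 0" using V_nonzero by blast
  have "x = scale (\<beta> g 0) x" using Vcomm[OF x(1) one_V0] by simp
  then have "scale (\<beta> g 0 - 1) x = 0" by (simp add: scale_left_diff_distrib)
  then show ?thesis using x(2) by simp
qed

lemma V0_comm_hom: "y \<in> V 0 \<Longrightarrow> x \<in> V g \<Longrightarrow> y * x = x * y"
  using Vcomm[of x g y 0] by (simp add: beta_g0)

lemma V0_central: "y \<in> V 0 \<Longrightarrow> y * a = a * y"
proof -
  assume y: "y \<in> V 0"
  have "y * a = (\<Sum>g\<in>UNIV. y * comp a g)"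
    by (subst comp_sum[of a, symmetric]) (simp add: sum_distrib_left)
  also have "\<dots> = (\<Sum>g\<in>UNIV. comp a g * y)" using V0_comm_hom[OF y comp_in] by simp
  also have "\<dots> = a * y" by (simp add: sum_distrib_right[symmetric] comp_sum)
  finally show ?thesis .
qed

lemma V0_mult: "x \<in> V 0 \<Longrightarrow> y \<in> V 0 \<Longrightarrow> x * y \<in> V 0"
  using Vmult[of x 0 y 0] by simp

lemma psi_zero[simp]: "\<psi> 0 = 0"
  using psi_add[of 0 0] by simp

lemma psi_scale1: "\<psi> (scale c 1) = c"
  using psi_scale[OF one_V0] psi_one by simp

lemma psi_neg: "x \<in> V 0 \<Longrightarrow> \<psi> (- x) = - \<psi> x"
  using psi_add[of x "- x"] V_neg[of x 0] by (simp add: eq_neg_iff_add_eq_0 add.commute)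

lemma psi_diff: "x \<in> V 0 \<Longrightarrow> y \<in> V 0 \<Longrightarrow> \<psi> (x - y) = \<psi> x - \<psi> y"
  using psi_add[of x "- y"] psi_neg[of y] V_neg[of y 0] by simp

lemma psi_sum: "(\<And>i. i \<in> I \<Longrightarrow> f i \<in> V 0) \<Longrightarrow> \<psi> (sum f I) = (\<Sum>i\<in>I. \<psi> (f i))"
proof (induct I rule: infinite_finite_induct)
  case (insert x F)
  then show ?case by (simp add: psi_add V_sum)
qed auto

lemma scale1_mult: "scale c 1 * y = scale c y"
  using sc_multL[of c 1 y] by simp

lemma V0_decomp: "x \<in> V 0 \<Longrightarrow> x = scale (\<psi> x) 1 + (x - scale (\<psi> x) 1) \<and> x - scale (\<psi> x) 1 \<in> V 0 \<and> \<psi> (x - scale (\<psi> x) 1) = 0"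
  using one_V0 by (simp add: V_diff V_scale psi_diff psi_scale1)

lemma J_eq: "jacobson (V 0) = {x \<in> V 0. \<psi> x = 0}" using psi_ker by simp

lemma unit_left: assumes y: "y \<in> V 0" and py: "\<psi> y \<noteq> 0" shows "\<exists>z\<in>V 0. z * y = 1"
proof (rule ccontr)
  assume no: "\<not> (\<exists>z\<in>V 0. z * y = 1)"
  define I0 where "I0 = {z * y | z. z \<in> V 0}"
  define F where "F = {I. left_ideal_in (V 0) I \<and> I0 \<subseteq> I \<and> 1 \<notin> I}"
  have I0F: "I0 \<in> F"
    unfolding F_def left_ideal_in_def
  proof (intro CollectI conjI ballI)
    show "I0 \<subseteq> V 0" using y by (auto simp: I0_def V0_mult)
    show "0 \<in> I0" unfolding I0_def by (rule CollectI, rule exI[of _ 0]) simp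
    show "a + b \<in> I0" if ab: "a \<in> I0" "b \<in> I0" for a b
    proof -
      obtain z z' where "z \<in> V 0" "z' \<in> V 0" "a = z * y" "b = z' * y" using ab unfolding I0_def by blast
      then show ?thesis unfolding I0_def by (intro CollectI exI[of _ "z + z'"]) (auto simp: distrib_right V_add)
    qed
    show "- a \<in> I0" if aa: "a \<in> I0" for a
    proof -
      obtain z where "z \<in> V 0" "a = z * y" using aa unfolding I0_def by blast
      then show ?thesis unfolding I0_def by (intro CollectI exI[of _ "- z"]) (auto simp: V_neg)
    qed
    show "s * a \<in> I0" if sa: "s \<in> V 0" "a \<in> I0" for s a
    proof -
      obtain z where "z \<in> V 0" "a = z * y" using sa(2) unfolding I0_def by blast
      then show ?thesis unfolding I0_def using sa(1) by (intro CollectI exI[of _ "s * z"]) (auto simp: V0_mult mult.assoc)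
    qed
    show "1 \<notin> I0" using no by (auto simp: I0_def)
  qed auto
  have "\<exists>M\<in>F. \<forall>X\<in>F. M \<subseteq> X \<longrightarrow> X = M"
  proof (rule Zorn_Lemma2, intro ballI)
    fix C assume C: "C \<in> chains F"
    show "\<exists>U\<in>F. \<forall>X\<in>C. X \<subseteq> U"
    proof (cases "C = {}")
      case True then show ?thesis using I0F by auto
    next
      case False
      have CF: "C \<subseteq> F" and ch: "\<And>X Y. X \<in> C \<Longrightarrow> Y \<in> C \<Longrightarrow> X \<subseteq> Y \<or> Y \<subseteq> X"
        using C by (auto simp: chains_def chain_subset_def)
      have "\<Union>C \<in> F"
        unfolding F_def left_ideal_in_def
      proof (intro CollectI conjI ballI)
        show "\<Union>C \<subseteq> V 0" using CF by (auto simp: F_def left_ideal_in_def)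
        show "0 \<in> \<Union>C" using CF False by (auto simp: F_def left_ideal_in_def)
        show "I0 \<subseteq> \<Union>C" using CF False by (auto simp: F_def)
        show "1 \<notin> \<Union>C" using CF by (auto simp: F_def)
        show "a + b \<in> \<Union>C" if ab: "a \<in> \<Union>C" "b \<in> \<Union>C" for a b
        proof -
          obtain X Y where XY: "X \<in> C" "Y \<in> C" "a \<in> X" "b \<in> Y" using ab by auto
          show ?thesis
          proof (cases "X \<subseteq> Y")
            case True
            moreover have "left_ideal_in (V 0) Y" using XY CF by (auto simp: F_def)
            ultimately have "a + b \<in> Y" using XY unfolding left_ideal_in_def by blast
            then show ?thesis using XY by auto
          next
            case False
            then have "Y \<subseteq> X" using ch XY by blast
            moreover have "left_ideal_in (V 0) X" using XY CF by (auto simp: F_def)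
            ultimately have "a + b \<in> X" using XY unfolding left_ideal_in_def by blast
            then show ?thesis using XY by auto
          qed
        qed
        show "- a \<in> \<Union>C" if aa: "a \<in> \<Union>C" for a
        proof -
          obtain X where X: "X \<in> C" "a \<in> X" using aa by auto
          then have "left_ideal_in (V 0) X" using CF by (auto simp: F_def)
          then have "- a \<in> X" using X unfolding left_ideal_in_def by blast
          then show ?thesis using X by auto
        qed
        show "s * a \<in> \<Union>C" if sa: "s \<in> V 0" "a \<in> \<Union>C" for s a
        proof -
          obtain X where X: "X \<in> C" "a \<in> X" using sa by auto
          then have "left_ideal_in (V 0) X" using CF by (auto simp: F_def)
          then have "s * a \<in> X" using X sa unfolding left_ideal_in_def by blast
          then show ?thesis using X by auto
        qed
      qed
      then show ?thesis by auto
    qed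
  qed
  then obtain M where MF: "M \<in> F" and Mmax: "\<And>X. X \<in> F \<Longrightarrow> M \<subseteq> X \<Longrightarrow> X = M" by blast
  have Mli: "left_ideal_in (V 0) M" and I0M: "I0 \<subseteq> M" and oneM: "1 \<notin> M" using MF by (auto simp: F_def)
  have "maximal_left_ideal_in (V 0) M"
    unfolding maximal_left_ideal_in_def
  proof (intro conjI allI impI)
    show "left_ideal_in (V 0) M" by fact
    show "M \<noteq> V 0" using oneM one_V0 by auto
    fix I' assume I': "left_ideal_in (V 0) I' \<and> M \<subseteq> I'"
    show "I' = M \<or> I' = V 0"
    proof (cases "1 \<in> I'")
      case True
      have "I' = V 0"
      proof
        show "I' \<subseteq> V 0" using I' by (auto simp: left_ideal_in_def)
        show "V 0 \<subseteq> I'"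
        proof
          fix s assume "s \<in> V 0"
          then have "s * 1 \<in> I'" using I' True unfolding left_ideal_in_def by blast
          then show "s \<in> I'" by simp
        qed
      qed
      then show ?thesis by simp
    next
      case False
      then have "I' \<in> F" using I' I0M by (auto simp: F_def)
      then show ?thesis using Mmax I' by blast
    qed
  qed
  then have JM: "jacobson (V 0) \<subseteq> M" by (auto simp: jacobson_def)
  have d: "y - scale (\<psi> y) 1 \<in> M" using V0_decomp[OF y] JM J_eq by auto
  have "y \<in> I0" unfolding I0_def using one_V0 by force
  then have yM: "y \<in> M" using I0M by auto
  have "y + - (y - scale (\<psi> y) 1) \<in> M" using Mli d yM unfolding left_ideal_in_def by blast
  then have sM: "scale (\<psi> y) 1 \<in> M" by simp
  have "scale (inverse (\<psi> y)) 1 * scale (\<psi> y) 1 \<in> M"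
    using Mli sM V_scale[OF one_V0] unfolding left_ideal_in_def by blast
  then have "1 \<in> M" using py by (simp add: scale1_mult)
  then show False using oneM by simp
qed

lemma unit_V0: assumes y: "y \<in> V 0" and py: "\<psi> y \<noteq> 0"
  shows "\<exists>z\<in>V 0. z * y = 1 \<and> y * z = 1"
  using unit_left[OF assms] V0_central[OF y] by metis

lemma J_unit: assumes "x \<in> V 0" "\<psi> x = 0" shows "\<exists>z\<in>V 0. z * (1 - x) = 1 \<and> (1 - x) * z = 1"
  using assms by (intro unit_V0) (auto simp: V_diff one_V0 psi_diff psi_one)

lemma prod_list_V0: "set xs \<subseteq> V 0 \<Longrightarrow> prod_list xs \<in> V 0 \<and> \<psi> (prod_list xs) = prod_list (map \<psi> xs)"
  by (induct xs) (auto simp: one_V0 psi_one V0_mult psi_mult)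

lemma unit_cancel: assumes w: "w \<in> V 0" "\<psi> w \<noteq> 0" and "q * w = 0" shows "q = 0"
proof -
  obtain z where "z \<in> V 0" "w * z = 1" using unit_V0[OF w] by blast
  then have "q = q * w * z" by (simp add: mult.assoc)
  then show ?thesis using assms by simp
qed

lemma NIL: assumes len: "length rs = Suc (card B)" and rsJ: "set rs \<subseteq> {x\<in>V 0. \<psi> x = 0}"
  shows "prod_list rs = 0"
proof (rule ccontr)
  assume p0: "prod_list rs \<noteq> 0"
  define L where "L = length rs"
  define q where "q k = prod_list (take k rs)" for k
  define r where "r k j = prod_list (take (j - k) (drop k rs))" for k j
  have qr: "q j = q k * r k j" if "k \<le> j" for k j
  proof -
    have "take j rs = take (k + (j - k)) rs" using that by simp
    also have "\<dots> = take k rs @ take (j - k) (drop k rs)" by (rule take_add)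
    finally show ?thesis by (simp add: q_def r_def)
  qed
  have qL: "q L = prod_list rs" by (simp add: q_def L_def)
  have qnz: "q k \<noteq> 0" if "k \<le> L" for k
    using qr[OF that] qL p0 by auto
  have rV: "r k j \<in> V 0" for k j
  proof -
    have "set (take (j - k) (drop k rs)) \<subseteq> V 0" using rsJ by (auto dest: in_set_takeD in_set_dropD)
    then show ?thesis using prod_list_V0 by (simp add: r_def)
  qed
  have rpsi: "\<psi> (r k j) = (if j = k then 1 else 0)" if "k \<le> j" "j \<le> L" for k j
  proof -
    have sub: "set (take (j - k) (drop k rs)) \<subseteq> {x\<in>V 0. \<psi> x = 0}" using rsJ by (auto dest: in_set_takeD in_set_dropD)
    have e: "\<psi> (r k j) = prod_list (map \<psi> (take (j - k) (drop k rs)))"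
      using prod_list_V0 sub by (auto simp: r_def)
    show ?thesis
    proof (cases "j = k")
      case True then show ?thesis by (simp add: r_def psi_one)
    next
      case False
      then have "take (j - k) (drop k rs) \<noteq> []" using that by (simp add: L_def)
      then have "0 \<in> set (map \<psi> (take (j - k) (drop k rs)))" using sub by (cases "take (j - k) (drop k rs)") auto
      then show ?thesis using e False by (simp add: prod_list_zero_iff)
    qed
  qed
  have dep: "\<exists>c. (\<exists>j\<le>L. c j \<noteq> 0) \<and> (\<Sum>j\<le>L. scale (c j) (q j)) = 0"
  proof (cases "inj_on q {..L}")
    case False
    then obtain i j where ij: "i \<le> L" "j \<le> L" "i \<noteq> j" "q i = q j" by (auto simp: inj_on_def)
    define c where "c t = (if t = i then 1 else if t = j then -1 else (0::'k))" for t
    have "(\<Sum>t\<le>L. scale (c t) (q t)) = (\<Sum>t\<le>L. (if t = i then q i else 0) + (if t = j then - q j else 0))"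
      by (rule sum.cong) (auto simp: c_def ij(3))
    also have "\<dots> = q i - q j" using ij by (simp add: sum.distrib)
    finally show ?thesis using ij by (intro exI[of _ c]) (auto simp: c_def)
  next
    case True
    define Q where "Q = q ` {..L}"
    have cQ: "card Q = Suc (Suc (card B))" using True len by (simp add: Q_def card_image L_def)
    have "dependent Q"
    proof (rule ccontr)
      assume "independent Q"
      then have "card Q \<le> card B" using independent_span_bound[OF finB] spanB by auto
      then show False using cQ by simp
    qed
    moreover have "finite Q" by (simp add: Q_def)
    ultimately obtain u where u: "\<exists>v\<in>Q. u v \<noteq> 0" "(\<Sum>v\<in>Q. scale (u v) v) = 0"
      using dependent_finite by blast
    have "(\<Sum>v\<in>Q. scale (u v) v) = (\<Sum>j\<le>L. scale (u (q j)) (q j))"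
      unfolding Q_def using sum.reindex[OF True, of "\<lambda>v. scale (u v) v"] by simp
    then show ?thesis using u by (intro exI[of _ "\<lambda>j. u (q j)"]) (auto simp: Q_def)
  qed
  then obtain c j0 where c: "j0 \<le> L" "c j0 \<noteq> 0" "(\<Sum>j\<le>L. scale (c j) (q j)) = 0" by blast
  define k where "k = (LEAST j. c j \<noteq> 0)"
  have ck: "c k \<noteq> 0" using c(2) unfolding k_def by (rule LeastI)
  have kj0: "k \<le> j0" using c(2) unfolding k_def by (rule Least_le)
  have below: "c i = 0" if "i < k" for i using not_less_Least[of i "\<lambda>j. c j \<noteq> 0"] that by (simp add: k_def)
  have kL: "k \<le> L" using kj0 c(1) by simp
  have split: "{..L} = {..<k} \<union> {k..L}" using kL by auto
  have "(\<Sum>j\<le>L. scale (c j) (q j)) = (\<Sum>j\<in>{..<k}. scale (c j) (q j)) + (\<Sum>j\<in>{k..L}. scale (c j) (q j))"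
    unfolding split by (rule sum.union_disjoint) auto
  also have "(\<Sum>j\<in>{..<k}. scale (c j) (q j)) = 0" using below by simp
  also have "(\<Sum>j\<in>{k..L}. scale (c j) (q j)) = (\<Sum>j\<in>{k..L}. q k * scale (c j) (r k j))"
    by (rule sum.cong) (auto simp: qr sc_multR)
  also have "\<dots> = q k * (\<Sum>j\<in>{k..L}. scale (c j) (r k j))" by (simp add: sum_distrib_left)
  finally have eq0: "q k * (\<Sum>j\<in>{k..L}. scale (c j) (r k j)) = 0" using c(3) by simp
  have wV: "(\<Sum>j\<in>{k..L}. scale (c j) (r k j)) \<in> V 0" by (intro V_sum V_scale rV)
  have "\<psi> (\<Sum>j\<in>{k..L}. scale (c j) (r k j)) = (\<Sum>j\<in>{k..L}. c j * \<psi> (r k j))"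
    by (subst psi_sum) (auto intro: V_scale rV simp: psi_scale rV)
  also have "\<dots> = c k * \<psi> (r k k) + (\<Sum>j\<in>{Suc k..L}. c j * \<psi> (r k j))"
    using kL by (simp add: sum.atLeast_Suc_atMost)
  also have "(\<Sum>j\<in>{Suc k..L}. c j * \<psi> (r k j)) = 0" using rpsi by (intro sum.neutral) auto
  also have "\<psi> (r k k) = 1" using rpsi kL by simp
  finally have "\<psi> (\<Sum>j\<in>{k..L}. scale (c j) (r k j)) \<noteq> 0" using ck by simp
  then have "q k = 0" using unit_cancel[OF wV _ eq0] by blast
  then show False using qnz kL by blast
qed

lemma nilp: assumes "x \<in> V 0" "\<psi> x = 0" "m \<ge> Suc (card B)" shows "x ^ m = 0"
proof -
  have "set (replicate (Suc (card B)) x) \<subseteq> {x\<in>V 0. \<psi> x = 0}" using assms by auto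
  then have "x ^ Suc (card B) = 0" using NIL[of "replicate (Suc (card B)) x"] by (simp only: prod_list_replicate length_replicate)
  then have "x ^ (Suc (card B) + (m - Suc (card B))) = 0" by (simp only: power_add mult_zero_left)
  then show ?thesis using assms(3) by simp
qed

lemma pair_prod: "length as = 2 * n \<Longrightarrow> (\<forall>i<2*n. as ! i \<in> V (if even i then g else - g)) \<Longrightarrow>
   \<exists>rs. length rs = n \<and> (\<forall>r\<in>set rs. \<exists>a\<in>V g. \<exists>b\<in>V (- g). r = a * b) \<and> prod_list rs = prod_list as"
proof (induct n arbitrary: as)
  case 0 then show ?case by simp
next
  case (Suc n)
  then obtain a b rest where as: "as = a # b # rest"
    by (cases as; cases "tl as") auto
  have rest: "length rest = 2 * n" using Suc.prems(1) as by simp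
  have "\<forall>i<2*n. rest ! i \<in> V (if even i then g else - g)"
  proof (intro allI impI)
    fix i assume "i < 2 * n"
    then have "Suc (Suc i) < 2 * Suc n" by simp
    then have "as ! (Suc (Suc i)) \<in> V (if even (Suc (Suc i)) then g else - g)" using Suc.prems(2) by blast
    then show "rest ! i \<in> V (if even i then g else - g)" using as by simp
  qed
  then obtain rs where rs: "length rs = n" "\<forall>r\<in>set rs. \<exists>a\<in>V g. \<exists>b\<in>V (- g). r = a * b" "prod_list rs = prod_list rest"
    using Suc.hyps[OF rest] by blast
  have a: "a \<in> V g" using Suc.prems(2)[rule_format, of 0] as by simp
  have b: "b \<in> V (- g)" using Suc.prems(2)[rule_format, of 1] as by simp
  show ?case using rs a b as by (intro exI[of _ "(a * b) # rs"]) (auto simp: mult.assoc)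
qed

lemma exists_psi_pair: "\<exists>a\<in>V g. \<exists>b\<in>V (- g). \<psi> (a * b) \<noteq> 0"
proof (rule ccontr)
  assume no: "\<not> ?thesis"
  define n where "n = Suc (card B)"
  define gs where "gs = map (\<lambda>i. if even i then g else - g) [0..<2*n]"
  have "gs \<noteq> []" by (simp add: gs_def n_def)
  then obtain as where as: "length as = length gs" "\<forall>i<length gs. as ! i \<in> V (gs ! i)" "prod_list as \<noteq> 0"
    using reg by blast
  have "length as = 2 * n" "\<forall>i<2*n. as ! i \<in> V (if even i then g else - g)"
    using as by (auto simp: gs_def)
  then obtain rs where rs: "length rs = n" "\<forall>r\<in>set rs. \<exists>a\<in>V g. \<exists>b\<in>V (- g). r = a * b" "prod_list rs = prod_list as"
    using pair_prod by blast
  have "set rs \<subseteq> {x\<in>V 0. \<psi> x = 0}"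
  proof
    fix r assume "r \<in> set rs"
    then obtain a b where "a \<in> V g" "b \<in> V (- g)" "r = a * b" using rs by blast
    then show "r \<in> {x\<in>V 0. \<psi> x = 0}" using no Vmult[of a g b "- g"] by auto
  qed
  then have "prod_list rs = 0" using NIL rs by (simp add: n_def)
  then show False using rs as by simp
qed

lemma exists_unit: "\<exists>u\<in>V g. \<exists>v\<in>V (- g). u * v = 1 \<and> v * u = 1"
proof -
  obtain a b where ab: "a \<in> V g" "b \<in> V (- g)" "\<psi> (a * b) \<noteq> 0" using exists_psi_pair by blast
  have abV: "a * b \<in> V 0" using Vmult[OF ab(1,2)] by simp
  have baV: "b * a \<in> V 0" using Vmult[OF ab(2,1)] by simp
  have "\<psi> (a * b) = \<beta> g (- g) * \<psi> (b * a)" using Vcomm[OF ab(1,2)] psi_scale[OF baV] by simp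
  then have pba: "\<psi> (b * a) \<noteq> 0" using ab(3) by auto
  obtain z where z: "z \<in> V 0" "a * b * z = 1" using unit_V0[OF abV ab(3)] by blast
  obtain z' where z': "z' \<in> V 0" "z' * (b * a) = 1" using unit_V0[OF baV pba] by blast
  have "z' * b = z' * b * (a * (b * z))" using z(2) by (simp add: mult.assoc)
  also have "\<dots> = (z' * (b * a)) * (b * z)" by (simp add: mult.assoc)
  finally have eq: "z' * b = b * z" using z'(2) by simp
  have "b * z \<in> V (- g)" using Vmult[OF ab(2) z(1)] by simp
  moreover have "a * (b * z) = 1" using z(2) by (simp add: mult.assoc)
  moreover have "(b * z) * a = 1" using z'(2) eq[symmetric] by (simp add: mult.assoc)
  ultimately show ?thesis using ab(1) by blast
qed

end


context GA
begin

definition ev :: "'a \<Rightarrow> 'k poly \<Rightarrow> 'a" where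
  "ev x p = (\<Sum>i\<le>degree p. scale (coeff p i) (x ^ i))"

lemma ev_bound: "degree p \<le> M \<Longrightarrow> ev x p = (\<Sum>i\<le>M. scale (coeff p i) (x ^ i))"
  unfolding ev_def by (rule sum.mono_neutral_left) (auto simp: coeff_eq_0)

lemma ev_pCons: "ev x (pCons a p) = scale a 1 + x * ev x p"
proof -
  have "ev x (pCons a p) = (\<Sum>i\<le>Suc (degree p). scale (coeff (pCons a p) i) (x ^ i))"
    by (rule ev_bound) (simp add: degree_pCons_le)
  also have "\<dots> = scale a 1 + (\<Sum>i\<le>degree p. scale (coeff p i) (x * x ^ i))"
    by (subst sum.atMost_Suc_shift) simp
  also have "\<dots> = scale a 1 + x * ev x p"
    by (simp add: ev_def sum_distrib_left sc_multR)
  finally show ?thesis .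
qed

lemma ev_zero[simp]: "ev x 0 = 0" by (simp add: ev_def)

lemma ev_add: "ev x (p + q) = ev x p + ev x q"
proof -
  define M where "M = max (degree p) (degree q)"
  have "ev x (p + q) = (\<Sum>i\<le>M. scale (coeff (p + q) i) (x ^ i))"
    by (rule ev_bound) (simp add: M_def degree_add_le)
  also have "\<dots> = (\<Sum>i\<le>M. scale (coeff p i) (x ^ i)) + (\<Sum>i\<le>M. scale (coeff q i) (x ^ i))"
    by (simp add: scale_left_distrib sum.distrib)
  also have "\<dots> = ev x p + ev x q"
    by (simp add: ev_bound[symmetric] M_def)
  finally show ?thesis .
qed

lemma ev_smult: "ev x (smult c p) = scale c (ev x p)"
proof -
  have "ev x (smult c p) = (\<Sum>i\<le>degree p. scale (coeff (smult c p) i) (x ^ i))"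
    by (rule ev_bound) (simp add: degree_smult_le)
  also have "\<dots> = scale c (ev x p)" by (simp add: ev_def scale_sum_right)
  finally show ?thesis .
qed

lemma ev_pCons0: "ev x (pCons 0 p) = x * ev x p"
  by (simp add: ev_pCons)

lemma ev_mult: "ev x (p * q) = ev x p * ev x q"
proof (induct p rule: pCons_induct)
  case 0 then show ?case by simp
next
  case (pCons a p)
  have "ev x (pCons a p * q) = scale a (ev x q) + x * (ev x p * ev x q)"
    by (simp add: ev_add ev_smult ev_pCons0 pCons.hyps)
  also have "\<dots> = (scale a 1 + x * ev x p) * ev x q"
    by (simp add: distrib_right scale1_mult mult.assoc)
  finally show ?case by (simp add: ev_pCons)
qed

lemma ev_one[simp]: "ev x 1 = 1" by (simp add: ev_def)

lemma ev_pow: "ev x (p ^ m) = ev x p ^ m"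
  by (induct m) (simp_all add: ev_mult)

lemma pow_V0: "x \<in> V 0 \<Longrightarrow> x ^ i \<in> V 0 \<and> \<psi> (x ^ i) = \<psi> x ^ i"
  by (induct i) (auto simp: one_V0 psi_one V0_mult psi_mult)

lemma ev_V0: "x \<in> V 0 \<Longrightarrow> ev x p \<in> V 0"
  unfolding ev_def by (intro V_sum V_scale) (simp add: pow_V0)

lemma ev_psi: assumes "x \<in> V 0" "\<psi> x = 0" shows "\<psi> (ev x p) = coeff p 0"
proof -
  have "\<psi> (ev x p) = (\<Sum>i\<le>degree p. coeff p i * \<psi> (x ^ i))"
    unfolding ev_def using assms by (subst psi_sum) (auto intro: V_scale simp: pow_V0 psi_scale)
  also have "\<dots> = (\<Sum>i\<le>degree p. if i = 0 then coeff p 0 else 0)"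
    using assms by (intro sum.cong) (auto simp: pow_V0)
  finally show ?thesis by simp
qed

lemma root_exists: assumes y: "y \<in> V 0" "\<psi> y = 1" and n: "n \<ge> 1"
  shows "\<exists>r\<in>V 0. \<psi> r = 1 \<and> r ^ n = y"
proof -
  define x where "x = y - 1"
  have xV: "x \<in> V 0" and px: "\<psi> x = 0" using y one_V0 by (auto simp: x_def V_diff psi_diff psi_one)
  define N where "N = Suc (Suc (card B))"
  have xN: "x ^ i = 0" if "i \<ge> N" for i using nilp[OF xV px] that by (simp add: N_def)
  define F :: "'k fps" where "F = fps_binomial (inverse (of_nat n))"
  have Fn: "F ^ n = 1 + fps_X" using n by (simp add: F_def fps_binomial_power fps_binomial_1)
  define P where "P = (\<Sum>i<N. monom (fps_nth F i) i)"
  have cP: "coeff P i = (if i < N then fps_nth F i else 0)" for i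
    by (simp add: P_def coeff_sum)
  have T: "coeff (P ^ m) i = fps_nth (F ^ m) i" if "i < N" for m i
    using that
  proof (induct m arbitrary: i)
    case 0 then show ?case by simp
  next
    case (Suc m)
    have "coeff (P ^ Suc m) i = (\<Sum>j\<le>i. coeff P j * coeff (P ^ m) (i - j))"
      by (simp add: coeff_mult)
    also have "\<dots> = (\<Sum>j\<le>i. fps_nth F j * fps_nth (F ^ m) (i - j))"
      using Suc by (intro sum.cong) (auto simp: cP)
    also have "\<dots> = fps_nth (F ^ Suc m) i" by (simp add: fps_mult_nth atLeast0AtMost)
    finally show ?case .
  qed
  define r where "r = ev x P"
  have "r ^ n = ev x (P ^ n)" by (simp add: r_def ev_pow)
  also have "\<dots> = (\<Sum>i\<le>max (degree (P ^ n)) N. scale (coeff (P ^ n) i) (x ^ i))"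
    by (rule ev_bound) simp
  also have "\<dots> = (\<Sum>i\<le>max (degree (P ^ n)) N. (if i = 0 then 1 else 0) + (if i = 1 then x else 0))"
  proof (intro sum.cong refl)
    fix i
    show "scale (coeff (P ^ n) i) (x ^ i) = (if i = 0 then 1 else 0) + (if i = 1 then x else 0)"
    proof (cases "i < N")
      case True
      then show ?thesis by (auto simp: T Fn)
    next
      case False
      then show ?thesis using xN[of i] by (auto simp: N_def)
    qed
  qed
  also have "\<dots> = 1 + x" by (simp add: sum.distrib N_def le_max_iff_disj)
  also have "\<dots> = y" by (simp add: x_def)
  finally have rn: "r ^ n = y" .
  have "\<psi> r = 1" using ev_psi[OF xV px] by (simp add: r_def cP N_def F_def)
  moreover have "r \<in> V 0" using ev_V0[OF xV] by (simp add: r_def)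
  ultimately show ?thesis using rn by blast
qed

end


lemma sum_conv:
  fixes F :: "'g::{finite,ab_group_add} \<Rightarrow> 'g \<Rightarrow> 'b::comm_monoid_add"
  shows "(\<Sum>g\<in>UNIV. \<Sum>h\<in>UNIV. F g h) = (\<Sum>k\<in>UNIV. \<Sum>g\<in>UNIV. F g (k - g))"
proof -
  have "(\<Sum>h\<in>UNIV. F g h) = (\<Sum>k\<in>UNIV. F g (k - g))" for g
    by (rule sum.reindex_bij_witness[of _ "\<lambda>k. k - g" "\<lambda>h. g + h"]) auto
  then have "(\<Sum>g\<in>UNIV. \<Sum>h\<in>UNIV. F g h) = (\<Sum>g\<in>UNIV. \<Sum>k\<in>UNIV. F g (k - g))" by simp
  also have "\<dots> = (\<Sum>k\<in>UNIV. \<Sum>g\<in>UNIV. F g (k - g))" by (rule sum.swap)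
  finally show ?thesis .
qed

context GA
begin

lemma one_nz: "(1::'a) \<noteq> 0"
proof
  assume "(1::'a) = 0"
  then have "x = 0" for x :: 'a by (metis mult_1_left mult_zero_left)
  then show False using V_nonzero by blast
qed

lemma U_eq: "{scale c 1 + j | c j. j \<in> jacobson (V 0)} = V 0"
proof
  show "{scale c 1 + j | c j. j \<in> jacobson (V 0)} \<subseteq> V 0"
    using J_eq one_V0 by (auto intro!: V_add V_scale)
  show "V 0 \<subseteq> {scale c 1 + j | c j. j \<in> jacobson (V 0)}"
  proof
    fix x assume x: "x \<in> V 0"
    then show "x \<in> {scale c 1 + j | c j. j \<in> jacobson (V 0)}"
      using V0_decomp[OF x] J_eq by blast
  qed
qed

lemma V0_subalg: "subalgebra scale (V 0)"
  unfolding subalgebra_def using subV one_V0 V0_mult by blast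

lemma V0_commset: "commutative_set (V 0)"
  unfolding commutative_set_def using V0_central by blast

lemma iso_construct:
  assumes wV: "\<And>g. w g \<in> V g" and wiV: "\<And>g. wi g \<in> V (- g)"
    and wwi: "\<And>g. w g * wi g = 1" and wiw: "\<And>g. wi g * w g = 1"
    and ww: "\<And>g h. w g * w h = scale (\<alpha> g h) (w (g + h))"
    and anz: "\<And>g h. \<alpha> g h \<noteq> 0"
  shows "two_cocycle \<alpha> \<and> induces \<alpha> \<beta> \<and> (\<exists>\<phi>. graded_iso_tt scale V \<alpha> (V 0) \<phi>) \<and>
         (jacobson (V 0) = {0} \<longrightarrow> (\<exists>\<phi>. graded_iso_tga scale V \<alpha> \<phi>))"
proof -
  have gk: "g + (k - g) = k" for g k :: 'g by (simp add: algebra_simps)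
  have wnz: "w g \<noteq> 0" for g using wwi[of g] one_nz by auto
  have wix: "wi g * x \<in> V 0" if "x \<in> V g" for x g using Vmult[OF wiV[of g] that] by simp
  have wiwx: "wi g * (w g * x) = x" for g x using wiw by (simp add: mult.assoc[symmetric])
  have wwix: "w g * (wi g * x) = x" for g x using wwi by (simp add: mult.assoc[symmetric])
  have coc: "two_cocycle \<alpha>"
    unfolding two_cocycle_def
  proof (intro conjI allI)
    fix g h k
    have "(w g * w h) * w k = scale (\<alpha> g h * \<alpha> (g + h) k) (w (g + h + k))"
      by (simp add: ww sc_multL[symmetric] mult.assoc)
    moreover have "w g * (w h * w k) = scale (\<alpha> h k * \<alpha> g (h + k)) (w (g + h + k))"
      by (simp add: ww sc_multR[symmetric] add.assoc mult.commute)
    ultimately have "scale (\<alpha> g h * \<alpha> (g + h) k) (w (g + h + k)) = scale (\<alpha> h k * \<alpha> g (h + k)) (w (g + h + k))"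
      by (metis mult.assoc)
    then show "\<alpha> g h * \<alpha> (g + h) k = \<alpha> h k * \<alpha> g (h + k)" using wnz scale_cancel_right by metis
  qed (rule anz)
  have ind: "induces \<alpha> \<beta>"
    unfolding induces_def
  proof (intro allI)
    fix g h
    have "scale (\<alpha> g h) (w (g + h)) = scale (\<beta> g h * \<alpha> h g) (w (g + h))"
      using Vcomm[OF wV wV, of g h] by (simp add: ww add.commute)
    then have "\<alpha> g h = \<beta> g h * \<alpha> h g" using wnz by simp
    then show "\<beta> g h = \<alpha> g h / \<alpha> h g" using anz[of h g] by (simp add: field_simps)
  qed
  have w0: "w 0 = scale (\<alpha> 0 0) 1"
  proof -
    have "w 0 = w 0 * w 0 * wi 0" using wwi by (simp add: mult.assoc)
    also have "\<dots> = scale (\<alpha> 0 0) 1" by (simp add: ww sc_multL[symmetric] wwi)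
    finally show ?thesis .
  qed
  define \<phi> where "\<phi> u = (\<Sum>g\<in>UNIV. w g * u g)" for u
  have compphi: "comp (\<phi> u) = (\<lambda>g. w g * u g)" if "u \<in> tt_carrier (V 0)" for u
    using that by (intro comp_unique) (auto simp: \<phi>_def tt_carrier_def intro: Vmult[of _ _ _ 0, simplified] wV)
  have recov: "u g = wi g * comp (\<phi> u) g" if "u \<in> tt_carrier (V 0)" for u g
    using compphi[OF that] by (simp add: wiwx)
  have tt: "graded_iso_tt scale V \<alpha> (V 0) \<phi>"
    unfolding graded_iso_tt_def
  proof (intro conjI ballI allI)
    show "bij_betw \<phi> (tt_carrier (V 0)) UNIV"
    proof (rule bij_betw_imageI)
      show "inj_on \<phi> (tt_carrier (V 0))"
      proof (rule inj_onI)
        fix u v assume uv: "u \<in> tt_carrier (V 0)" "v \<in> tt_carrier (V 0)" "\<phi> u = \<phi> v"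
        show "u = v"
        proof (rule ext)
          fix g show "u g = v g" using recov[OF uv(1), of g] recov[OF uv(2), of g] uv(3) by simp
        qed
      qed
      show "\<phi> ` tt_carrier (V 0) = UNIV"
      proof -
        have "a \<in> \<phi> ` tt_carrier (V 0)" for a
        proof -
          define u where "u g = wi g * comp a g" for g
          have "u \<in> tt_carrier (V 0)" using wix[OF comp_in] by (simp add: u_def tt_carrier_def)
          moreover have "\<phi> u = a" by (simp add: \<phi>_def u_def wwix comp_sum)
          ultimately show "a \<in> \<phi> ` tt_carrier (V 0)" by (intro rev_image_eqI[of u]) auto
        qed
        then show ?thesis by blast
      qed
    qed
    show "\<phi> (\<lambda>g. u g + v g) = \<phi> u + \<phi> v" for u v
      by (simp add: \<phi>_def distrib_left sum.distrib)
    show "\<phi> (\<lambda>g. scale c (u g)) = scale c (\<phi> u)" for c u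
      by (simp add: \<phi>_def sc_multR[symmetric] scale_sum_right)
    show "\<phi> (tt_mult scale \<alpha> u v) = \<phi> u * \<phi> v" if u: "u \<in> tt_carrier (V 0)" and v: "v \<in> tt_carrier (V 0)" for u v
    proof -
      have uV: "u g \<in> V 0" for g using u by (simp add: tt_carrier_def)
      have "\<phi> u * \<phi> v = (\<Sum>g\<in>UNIV. \<Sum>h\<in>UNIV. w g * u g * (w h * v h))"
        by (simp add: \<phi>_def sum_product)
      also have "\<dots> = (\<Sum>g\<in>UNIV. \<Sum>h\<in>UNIV. w (g + h) * scale (\<alpha> g h) (u g * v h))"
      proof (intro sum.cong refl)
        fix g h
        have "w g * u g * (w h * v h) = w g * (u g * w h) * v h" by (simp only: mult.assoc)
        also have "\<dots> = w g * (w h * u g) * v h" using V0_central[OF uV, of g "w h"] by simp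
        also have "\<dots> = w g * w h * (u g * v h)" by (simp only: mult.assoc)
        also have "\<dots> = w (g + h) * scale (\<alpha> g h) (u g * v h)"
          by (simp only: ww sc_multL[symmetric] sc_multR[symmetric])
        finally show "w g * u g * (w h * v h) = w (g + h) * scale (\<alpha> g h) (u g * v h)" .
      qed
      also have "\<dots> = (\<Sum>k\<in>UNIV. \<Sum>g\<in>UNIV. w (g + (k - g)) * scale (\<alpha> g (k - g)) (u g * v (k - g)))"
        by (rule sum_conv)
      also have "\<dots> = (\<Sum>k\<in>UNIV. w k * (\<Sum>g\<in>UNIV. scale (\<alpha> g (k - g)) (u g * v (k - g))))"
        using gk by (simp only: sum_distrib_left)
      also have "\<dots> = \<phi> (tt_mult scale \<alpha> u v)"
        unfolding \<phi>_def tt_mult_def by (rule refl)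
      finally show ?thesis by simp
    qed
    show "\<phi> (tt_one scale \<alpha>) = 1"
    proof -
      have "\<phi> (tt_one scale \<alpha>) = (\<Sum>g::'g\<in>UNIV. if g = 0 then w 0 * scale (inverse (\<alpha> 0 0)) 1 else 0)"
        unfolding \<phi>_def tt_one_def by (intro sum.cong refl) auto
      also have "\<dots> = 1" using anz[of 0 0] by (simp add: w0 sc_multR[symmetric] scale1_mult)
      finally show ?thesis .
    qed
    fix g
    show "\<phi> ` {u \<in> tt_carrier (V 0). \<forall>h. h \<noteq> g \<longrightarrow> u h = 0} = V g"
    proof (intro Set.set_eqI iffI)
      fix x assume "x \<in> \<phi> ` {u \<in> tt_carrier (V 0). \<forall>h. h \<noteq> g \<longrightarrow> u h = 0}"
      then obtain u where u: "u \<in> tt_carrier (V 0)" "\<forall>h. h \<noteq> g \<longrightarrow> u h = 0" "x = \<phi> u" by blast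
      have "\<phi> u = (\<Sum>h\<in>UNIV. if h = g then w g * u g else 0)"
        unfolding \<phi>_def by (rule sum.cong) (use u(2) in auto)
      also have "\<dots> = w g * u g" by simp
      finally show "x \<in> V g" using u Vmult[OF wV, of "u g" 0 g] by (simp add: tt_carrier_def)
    next
      fix x assume x: "x \<in> V g"
      define u where "u h = (if h = g then wi g * x else 0)" for h
      have "u \<in> tt_carrier (V 0)" using wix[OF x] by (simp add: u_def tt_carrier_def)
      moreover have "\<forall>h. h \<noteq> g \<longrightarrow> u h = 0" by (simp add: u_def)
      moreover have "\<phi> u = x"
      proof -
        have "\<phi> u = (\<Sum>h\<in>UNIV. if h = g then w g * (wi g * x) else 0)"
          unfolding \<phi>_def u_def by (rule sum.cong) auto
        then show ?thesis by (simp add: wwix)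
      qed
      ultimately show "x \<in> \<phi> ` {u \<in> tt_carrier (V 0). \<forall>h. h \<noteq> g \<longrightarrow> u h = 0}" by (intro rev_image_eqI[of u]) auto
    qed
  qed
  have tga: "\<exists>\<phi>. graded_iso_tga scale V \<alpha> \<phi>" if J0: "jacobson (V 0) = {0}"
  proof -
    have V0K: "x = scale (\<psi> x) 1" if "x \<in> V 0" for x
      using V0_decomp[OF that] J0 J_eq by (metis (mono_tags, lifting) add.right_neutral mem_Collect_eq singletonD)
    define \<chi> where "\<chi> f = (\<Sum>g\<in>UNIV. scale (f g) (w g))" for f
    have compchi: "comp (\<chi> f) = (\<lambda>g. scale (f g) (w g))" for f
      by (intro comp_unique) (auto simp: \<chi>_def intro: V_scale wV)
    have "graded_iso_tga scale V \<alpha> \<chi>"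
      unfolding graded_iso_tga_def
    proof (intro conjI allI)
      show "bij \<chi>"
      proof (rule bijI)
        show "inj \<chi>"
        proof (rule injI)
          fix f f' assume "\<chi> f = \<chi> f'"
          then have "scale (f g) (w g) = scale (f' g) (w g)" for g using compchi by metis
          then show "f = f'" using wnz by (auto intro: ext)
        qed
        show "surj \<chi>"
        proof (rule surjI)
          fix a :: 'a
          define f where "f g = \<psi> (wi g * comp a g)" for g
          have "scale (f g) (w g) = comp a g" for g
          proof -
            have m: "wi g * comp a g \<in> V 0" using wix[OF comp_in] by simp
            have "comp a g = w g * (wi g * comp a g)" by (simp add: wwix)
            also have "\<dots> = w g * scale (f g) 1" using V0K[OF m] by (simp add: f_def)
            finally show ?thesis by (simp add: sc_multR[symmetric])
          qed
          then show "\<chi> f = a" by (simp add: \<chi>_def comp_sum)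
        qed
      qed
      show "\<chi> (\<lambda>g. f g + f' g) = \<chi> f + \<chi> f'" for f f'
        by (simp add: \<chi>_def scale_left_distrib sum.distrib)
      show "\<chi> (\<lambda>g. c * f g) = scale c (\<chi> f)" for c f
        by (simp add: \<chi>_def scale_sum_right)
      show "\<chi> (tga_mult \<alpha> f f') = \<chi> f * \<chi> f'" for f f'
      proof -
        have "\<chi> f * \<chi> f' = (\<Sum>g\<in>UNIV. \<Sum>h\<in>UNIV. scale (f g) (w g) * scale (f' h) (w h))"
          by (simp add: \<chi>_def sum_product)
        also have "\<dots> = (\<Sum>g\<in>UNIV. \<Sum>h\<in>UNIV. scale (\<alpha> g h * f g * f' h) (w (g + h)))"
        proof (intro sum.cong refl)
          fix g h
          have "scale (f g) (w g) * scale (f' h) (w h) = scale (f g) (scale (f' h) (w g * w h))"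
            by (simp only: sc_multL[symmetric] sc_multR[symmetric] scale_scale mult.commute)
          also have "\<dots> = scale (\<alpha> g h * f g * f' h) (w (g + h))"
            by (simp add: ww mult.commute mult.left_commute)
          finally show "scale (f g) (w g) * scale (f' h) (w h) = scale (\<alpha> g h * f g * f' h) (w (g + h))" .
        qed
        also have "\<dots> = (\<Sum>k\<in>UNIV. \<Sum>g\<in>UNIV. scale (\<alpha> g (k - g) * f g * f' (k - g)) (w (g + (k - g))))"
          by (rule sum_conv)
        also have "\<dots> = (\<Sum>k\<in>UNIV. scale (\<Sum>g\<in>UNIV. \<alpha> g (k - g) * f g * f' (k - g)) (w k))"
          using gk by (simp only: scale_sum_left)
        also have "\<dots> = \<chi> (tga_mult \<alpha> f f')"
          unfolding \<chi>_def tga_mult_def by (rule refl)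
        finally show ?thesis by simp
      qed
      show "\<chi> (tga_one \<alpha>) = 1"
      proof -
        have e: "(\<lambda>g. scale (tga_one \<alpha> g) (w g)) = (\<lambda>g::'g. if g = 0 then scale (inverse (\<alpha> 0 0)) (w 0) else 0)"
          by (rule ext) (simp add: tga_one_def)
        have "\<chi> (tga_one \<alpha>) = (\<Sum>g::'g\<in>UNIV. if g = 0 then scale (inverse (\<alpha> 0 0)) (w 0) else 0)"
          unfolding \<chi>_def e ..
        also have "\<dots> = 1" using anz[of 0 0] by (simp add: w0)
        finally show ?thesis .
      qed
      fix g
      show "\<chi> ` {f. \<forall>h. h \<noteq> g \<longrightarrow> f h = 0} = V g"
      proof (intro Set.set_eqI iffI)
        fix x assume "x \<in> \<chi> ` {f. \<forall>h. h \<noteq> g \<longrightarrow> f h = 0}"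
        then obtain f where f: "\<forall>h. h \<noteq> g \<longrightarrow> f h = 0" "x = \<chi> f" by blast
        have "\<chi> f = (\<Sum>h\<in>UNIV. if h = g then scale (f g) (w g) else 0)"
          unfolding \<chi>_def by (rule sum.cong) (use f(1) in auto)
        then show "x \<in> V g" using f by (simp add: V_scale wV)
      next
        fix x assume x: "x \<in> V g"
        have m: "wi g * x \<in> V 0" using wix[OF x] by simp
        define c where "c = \<psi> (wi g * x)"
        have xe: "x = scale c (w g)"
        proof -
          have "x = w g * (wi g * x)" by (simp add: wwix)
          also have "\<dots> = w g * scale c 1" using V0K[OF m] by (simp add: c_def)
          finally show ?thesis by (simp add: sc_multR[symmetric])
        qed
        define f where "f h = (if h = g then c else 0)" for h
        have "\<chi> f = (\<Sum>h\<in>UNIV. if h = g then scale c (w g) else 0)"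
          unfolding \<chi>_def f_def by (rule sum.cong) auto
        then have "\<chi> f = x" using xe by simp
        moreover have "\<forall>h. h \<noteq> g \<longrightarrow> f h = 0" by (simp add: f_def)
        ultimately show "x \<in> \<chi> ` {f. \<forall>h. h \<noteq> g \<longrightarrow> f h = 0}" by blast
      qed
    qed
    then show ?thesis by blast
  qed
  show ?thesis using coc ind tt tga by blast
qed

end


lemma pow_comm_mult: fixes a b :: "'a::ring_1" assumes "a * b = b * a" shows "(a * b) ^ n = a ^ n * b ^ n"
proof (induct n)
  case (Suc n)
  have "(a * b) ^ Suc n = a * b * (a ^ n * b ^ n)" using Suc by simp
  also have "\<dots> = a * (b * a ^ n) * b ^ n" by (simp add: mult.assoc)
  also have "b * a ^ n = a ^ n * b" using power_commuting_commutes[of a b n] assms by simp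
  finally show ?case by (simp add: mult.assoc)
qed simp

context GA
begin

lemma root_unique1: assumes r: "r \<in> V 0" "\<psi> r = 1" and rn: "r ^ n = 1" and n: "n \<ge> 1" shows "r = 1"
proof -
  have tel: "(r - 1) * (\<Sum>i<m. r ^ i) = r ^ m - 1" for m
  proof (induct m)
    case (Suc m)
    have "(r - 1) * (\<Sum>i<Suc m. r ^ i) = (r ^ m - 1) + (r - 1) * r ^ m" using Suc by (simp add: distrib_left)
    also have "\<dots> = r ^ Suc m - 1" by (simp add: algebra_simps power_commuting_commutes)
    finally show ?case .
  qed simp
  have wV: "(\<Sum>i<n. r ^ i) \<in> V 0" using r by (intro V_sum) (simp add: pow_V0)
  have "\<psi> (\<Sum>i<n. r ^ i) = of_nat n" using r by (subst psi_sum) (auto simp: pow_V0)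
  then have pw: "\<psi> (\<Sum>i<n. r ^ i) \<noteq> 0" using n by simp
  have "(r - 1) * (\<Sum>i<n. r ^ i) = 0" using tel[of n] rn by simp
  then have "r - 1 = 0" using unit_cancel[OF wV pw] by blast
  then show ?thesis by simp
qed

definition "Hs = {x \<in> V 0. \<psi> x = 1}"

lemma Hs_mult: "x \<in> Hs \<Longrightarrow> y \<in> Hs \<Longrightarrow> x * y \<in> Hs"
  by (auto simp: Hs_def V0_mult psi_mult)

lemma Hs_one: "1 \<in> Hs" by (simp add: Hs_def one_V0 psi_one)

lemma Hs_inv: "x \<in> Hs \<Longrightarrow> \<exists>y\<in>Hs. y * x = 1 \<and> x * y = 1"
proof -
  assume x: "x \<in> Hs"
  then obtain z where z: "z \<in> V 0" "z * x = 1" "x * z = 1" using unit_V0[of x] by (auto simp: Hs_def)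
  have "\<psi> z * \<psi> x = 1" using psi_mult[OF z(1), of x] x z(2) by (simp add: Hs_def psi_one)
  then have "z \<in> Hs" using x z(1) by (simp add: Hs_def)
  then show ?thesis using z by blast
qed

lemma Hs_comm: "x \<in> Hs \<Longrightarrow> x * y = y * x" unfolding Hs_def using V0_central by blast

lemma root_unique: assumes x: "x \<in> Hs" and y: "y \<in> Hs" and e: "x ^ n = y ^ n" and n: "n \<ge> 1" shows "x = y"
proof -
  obtain yi where yi: "yi \<in> Hs" "yi * y = 1" "y * yi = 1" using Hs_inv[OF y] by blast
  have "(x * yi) ^ n = x ^ n * yi ^ n" by (rule pow_comm_mult) (simp add: Hs_comm[OF x])
  also have "\<dots> = y ^ n * yi ^ n" using e by simp
  also have "\<dots> = (y * yi) ^ n" by (rule pow_comm_mult[symmetric]) (rule Hs_comm[OF y])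
  finally have "(x * yi) ^ n = 1" using yi by simp
  moreover have "x * yi \<in> Hs" using Hs_mult x yi by blast
  ultimately have "x * yi = 1" using root_unique1 n by (auto simp: Hs_def)
  then have "x * yi * y = y" by simp
  then show ?thesis using yi by (simp add: mult.assoc)
qed

definition "H = \<lparr>carrier = Hs, mult = (\<lambda>x y. x * y), one = 1\<rparr>"

lemma H_simps[simp]: "carrier H = Hs" "mult H = (\<lambda>x y. x * y)" "one H = 1"
  by (simp_all add: H_def)

lemma H_group: "comm_group H"
  by (rule comm_groupI) (auto simp: Hs_mult Hs_one mult.assoc Hs_comm dest: Hs_inv)

lemma H_pow: "x [^]\<^bsub>H\<^esub> (m::nat) = x ^ m"
  by (induct m) (simp_all add: power_commutes)

definition "Uu g = (SOME u. u \<in> V g \<and> (\<exists>v\<in>V (- g). u * v = 1 \<and> v * u = 1))"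
definition "Ui g = (SOME v. v \<in> V (- g) \<and> Uu g * v = 1 \<and> v * Uu g = 1)"

lemma Uu_prop: "Uu g \<in> V g \<and> (\<exists>v\<in>V (- g). Uu g * v = 1 \<and> v * Uu g = 1)"
  unfolding Uu_def by (rule someI_ex) (use exists_unit in blast)

lemma Ui_prop: "Ui g \<in> V (- g) \<and> Uu g * Ui g = 1 \<and> Ui g * Uu g = 1"
  unfolding Ui_def by (rule someI_ex) (use Uu_prop in blast)

lemma UuV: "Uu g \<in> V g" using Uu_prop by blast
lemma UiV: "Ui g \<in> V (- g)" using Ui_prop by blast
lemma UuUi: "Uu g * Ui g = 1" using Ui_prop by blast
lemma UiUu: "Ui g * Uu g = 1" using Ui_prop by blast
lemma UuUix: "Uu g * (Ui g * x) = x" by (simp add: mult.assoc[symmetric] UuUi)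
lemma UiUux: "Ui g * (Uu g * x) = x" by (simp add: mult.assoc[symmetric] UiUu)

definition "cc g h = Ui (g + h) * Uu g * Uu h"

lemma ccV: "cc g h \<in> V 0"
proof -
  have "Ui (g + h) * Uu g \<in> V (- (g + h) + g)" by (rule Vmult[OF UiV UuV])
  from Vmult[OF this UuV[of h]] show ?thesis by (simp add: cc_def)
qed

lemma cc_eq: "Uu g * Uu h = Uu (g + h) * cc g h"
  by (simp add: cc_def mult.assoc[symmetric] UuUi)

lemma cc_psi: "\<psi> (cc g h) \<noteq> 0"
proof -
  define c' where "c' = Ui h * Ui g * Uu (g + h)"
  have "Ui h * Ui g \<in> V (- h + - g)" by (rule Vmult[OF UiV UiV])
  from Vmult[OF this UuV[of "g + h"]] have c'V: "c' \<in> V 0" by (simp add: c'_def)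
  have "cc g h * c' = Ui (g + h) * (Uu g * (Uu h * Ui h) * Ui g) * Uu (g + h)"
    by (simp add: cc_def c'_def mult.assoc)
  also have "\<dots> = 1" by (simp add: UuUi UiUu)
  finally have "\<psi> (cc g h) * \<psi> c' = 1" using psi_mult[OF ccV[of g h] c'V] psi_one by metis
  then show ?thesis by auto
qed

lemma cc_cocycle: "cc (g + h) k * cc g h = cc g (h + k) * cc h k"
proof -
  have "(Uu g * Uu h) * Uu k = Uu (g + h) * (cc g h * Uu k)" by (simp add: cc_eq mult.assoc)
  also have "cc g h * Uu k = Uu k * cc g h" by (rule V0_central[OF ccV])
  also have "Uu (g + h) * (Uu k * cc g h) = Uu (g + h + k) * (cc (g + h) k * cc g h)"
    by (simp add: mult.assoc[symmetric] cc_eq)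
  finally have e1: "Uu g * Uu h * Uu k = Uu (g + h + k) * (cc (g + h) k * cc g h)" .
  have "Uu g * (Uu h * Uu k) = (Uu g * Uu (h + k)) * cc h k" by (subst cc_eq[of h k]) (simp only: mult.assoc)
  also have "\<dots> = (Uu (g + (h + k)) * cc g (h + k)) * cc h k" by (simp only: cc_eq)
  also have "\<dots> = Uu (g + h + k) * (cc g (h + k) * cc h k)" by (simp add: mult.assoc add.assoc)
  finally have e2: "Uu g * (Uu h * Uu k) = Uu (g + h + k) * (cc g (h + k) * cc h k)" .
  have "Uu (g + h + k) * (cc (g + h) k * cc g h) = Uu (g + h + k) * (cc g (h + k) * cc h k)"
    using e1 e2 by (simp add: mult.assoc)
  then have "Ui (g + h + k) * (Uu (g + h + k) * (cc (g + h) k * cc g h)) = Ui (g + h + k) * (Uu (g + h + k) * (cc g (h + k) * cc h k))"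
    by simp
  then show ?thesis by (simp only: UiUux)
qed

definition "dd g h = scale (inverse (\<psi> (cc g h))) (cc g h)"

lemma ddH: "dd g h \<in> Hs"
  using cc_psi[of g h] by (simp add: Hs_def dd_def V_scale ccV psi_scale)

lemma dd_cocycle: "dd g h * dd (g + h) k = dd h k * dd g (h + k)"
proof -
  have p: "\<psi> (cc (g + h) k) * \<psi> (cc g h) = \<psi> (cc g (h + k)) * \<psi> (cc h k)"
    using cc_cocycle[of g h k] psi_mult[OF ccV ccV] by metis
  have "dd g h * dd (g + h) k = dd (g + h) k * dd g h" using ddH Hs_comm by blast
  also have "\<dots> = scale (inverse (\<psi> (cc (g + h) k) * \<psi> (cc g h))) (cc (g + h) k * cc g h)"
    by (simp add: dd_def sc_multL[symmetric] sc_multR[symmetric] mult.commute)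
  also have "\<dots> = scale (inverse (\<psi> (cc g (h + k)) * \<psi> (cc h k))) (cc g (h + k) * cc h k)"
    by (simp only: p cc_cocycle)
  also have "\<dots> = dd g (h + k) * dd h k"
    by (simp add: dd_def sc_multL[symmetric] sc_multR[symmetric] mult.commute)
  also have "\<dots> = dd h k * dd g (h + k)" using ddH Hs_comm by blast
  finally show ?thesis .
qed

lemma card_pos: "card (UNIV::'g set) \<ge> 1"
  using finite_UNIV_card_ge_0[where 'a='g] by simp

definition "tt g = finprod H (\<lambda>h. dd g h) UNIV"

lemma ttH: "tt g \<in> Hs"
proof -
  interpret Hg: comm_group H by (rule H_group)
  show ?thesis unfolding tt_def using Hg.finprod_closed[of "\<lambda>h. dd g h" UNIV] ddH by auto
qed

lemma tt_key: "dd g h ^ card (UNIV::'g set) * tt (g + h) = tt h * tt g"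
proof -
  interpret Hg: comm_group H by (rule H_group)
  have f1: "(\<lambda>k::'g. dd g h) \<in> UNIV \<rightarrow> carrier H" "(\<lambda>k. dd (g + h) k) \<in> UNIV \<rightarrow> carrier H"
    "(\<lambda>k. dd h k) \<in> UNIV \<rightarrow> carrier H" "(\<lambda>k. dd g (h + k)) \<in> UNIV \<rightarrow> carrier H"
    using ddH by auto
  have "finprod H (\<lambda>k. dd g h \<otimes>\<^bsub>H\<^esub> dd (g + h) k) UNIV = finprod H (\<lambda>k::'g. dd g h) UNIV \<otimes>\<^bsub>H\<^esub> tt (g + h)"
    unfolding tt_def by (rule Hg.finprod_multf[OF f1(1,2)])
  also have "finprod H (\<lambda>k::'g. dd g h) UNIV = dd g h [^]\<^bsub>H\<^esub> card (UNIV :: 'g set)"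
    by (rule Hg.finprod_const) (simp add: ddH)
  finally have L: "finprod H (\<lambda>k. dd g h \<otimes>\<^bsub>H\<^esub> dd (g + h) k) UNIV = dd g h ^ card (UNIV::'g set) * tt (g + h)"
    by (simp add: H_pow)
  have "finprod H (\<lambda>k. dd h k \<otimes>\<^bsub>H\<^esub> dd g (h + k)) UNIV = tt h \<otimes>\<^bsub>H\<^esub> finprod H (\<lambda>k. dd g (h + k)) UNIV"
    unfolding tt_def by (rule Hg.finprod_multf[OF f1(3,4)])
  also have "finprod H (\<lambda>k. dd g (h + k)) UNIV = finprod H (dd g) ((\<lambda>k. h + k) ` UNIV)"
    by (rule Hg.finprod_reindex[symmetric]) (auto simp: ddH inj_on_def)
  also have "(\<lambda>k. h + k) ` UNIV = (UNIV :: 'g set)"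
  proof -
    have "x \<in> (\<lambda>k. h + k) ` UNIV" for x :: 'g
      by (rule image_eqI[of _ _ "x - h"]) (simp_all add: algebra_simps)
    then show ?thesis by blast
  qed
  finally have R: "finprod H (\<lambda>k. dd h k \<otimes>\<^bsub>H\<^esub> dd g (h + k)) UNIV = tt h * tt g"
    by (simp add: tt_def)
  have "finprod H (\<lambda>k. dd g h \<otimes>\<^bsub>H\<^esub> dd (g + h) k) UNIV = finprod H (\<lambda>k. dd h k \<otimes>\<^bsub>H\<^esub> dd g (h + k)) UNIV"
    by (rule Hg.finprod_cong') (auto simp: dd_cocycle Hs_mult ddH)
  then show ?thesis using L R by simp
qed

definition "ss g = (SOME r. r \<in> Hs \<and> r ^ card (UNIV::'g set) = tt g)"

lemma ss_prop: "ss g \<in> Hs \<and> ss g ^ card (UNIV::'g set) = tt g"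
  unfolding ss_def
proof (rule someI_ex)
  obtain r where "r \<in> V 0" "\<psi> r = 1" "r ^ card (UNIV::'g set) = tt g"
    using root_exists[of "tt g" "card (UNIV::'g set)"] ttH card_pos by (auto simp: Hs_def)
  then show "\<exists>r. r \<in> Hs \<and> r ^ card (UNIV::'g set) = tt g" by (auto simp: Hs_def)
qed

definition "sig g = (SOME z. z \<in> Hs \<and> z * ss g = 1 \<and> ss g * z = 1)"

lemma sig_prop: "sig g \<in> Hs \<and> sig g * ss g = 1 \<and> ss g * sig g = 1"
  unfolding sig_def by (rule someI_ex) (use Hs_inv ss_prop in blast)

lemma ssH: "ss g \<in> Hs" using ss_prop by blast
lemma sigH: "sig g \<in> Hs" using sig_prop by blast
lemma H_V0: "x \<in> Hs \<Longrightarrow> x \<in> V 0" by (simp add: Hs_def)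

lemma dd_ss: "dd g h * ss (g + h) = ss g * ss h"
proof (rule root_unique[OF _ _ _ card_pos])
  show "dd g h * ss (g + h) \<in> Hs" using Hs_mult ddH ssH by blast
  show "ss g * ss h \<in> Hs" using Hs_mult ssH by blast
  have "(dd g h * ss (g + h)) ^ card (UNIV::'g set) = dd g h ^ card (UNIV::'g set) * ss (g + h) ^ card (UNIV::'g set)"
    by (rule pow_comm_mult) (rule Hs_comm[OF ddH])
  also have "\<dots> = tt h * tt g" using ss_prop tt_key by simp
  also have "\<dots> = ss h ^ card (UNIV::'g set) * ss g ^ card (UNIV::'g set)" using ss_prop by simp
  also have "\<dots> = (ss h * ss g) ^ card (UNIV::'g set)" by (rule pow_comm_mult[symmetric]) (rule Hs_comm[OF ssH])
  also have "ss h * ss g = ss g * ss h" by (rule Hs_comm[OF ssH])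
  finally show "(dd g h * ss (g + h)) ^ card (UNIV::'g set) = (ss g * ss h) ^ card (UNIV::'g set)" .
qed

lemma dd_sig: "dd g h * sig g * sig h = sig (g + h)"
proof -
  let ?A = "dd g h" and ?sg = "ss g" and ?sh = "ss h" and ?sk = "ss (g + h)"
  let ?tg = "sig g" and ?th = "sig h" and ?tk = "sig (g + h)"
  have c1: "?tg * ?sh = ?sh * ?tg" by (rule Hs_comm[OF sigH])
  have c2: "?A * ?sk = ?sk * ?A" by (rule Hs_comm[OF ddH])
  have "?tk = ?tk * ((?sg * ?tg) * (?sh * ?th))" using sig_prop by simp
  also have "(?sg * ?tg) * (?sh * ?th) = ?sg * (?tg * ?sh) * ?th" by (simp only: mult.assoc)
  also have "\<dots> = ?sg * (?sh * ?tg) * ?th" by (simp only: c1)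
  also have "\<dots> = (?sg * ?sh) * (?tg * ?th)" by (simp only: mult.assoc)
  also have "?sg * ?sh = ?sk * ?A" using dd_ss c2 by simp
  also have "?tk * ((?sk * ?A) * (?tg * ?th)) = (?tk * ?sk) * (?A * ?tg * ?th)" by (simp add: mult.assoc)
  also have "?tk * ?sk = 1" using sig_prop by simp
  finally show ?thesis by simp
qed

definition "ww g = Uu g * sig g"
definition "wwi g = ss g * Ui g"
definition "al g h = \<psi> (cc g h)"

lemma ww_props:
  shows "ww g \<in> V g" "wwi g \<in> V (- g)" "ww g * wwi g = 1" "wwi g * ww g = 1"
    "ww g * ww h = scale (al g h) (ww (g + h))" "al g h \<noteq> 0"
proof -
  show "ww g \<in> V g" using Vmult[OF UuV H_V0[OF sigH]] by (simp add: ww_def)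
  show "wwi g \<in> V (- g)" using Vmult[OF H_V0[OF ssH] UiV] by (simp add: wwi_def)
  show "ww g * wwi g = 1"
  proof -
    have "ww g * wwi g = Uu g * ((sig g * ss g) * Ui g)" by (simp add: ww_def wwi_def mult.assoc)
    then show ?thesis using sig_prop by (simp add: UuUi)
  qed
  show "wwi g * ww g = 1"
  proof -
    have "wwi g * ww g = ss g * ((Ui g * Uu g) * sig g)" by (simp add: ww_def wwi_def mult.assoc)
    then show ?thesis using sig_prop by (simp add: UiUu)
  qed
  show "al g h \<noteq> 0" using cc_psi by (simp add: al_def)
  have ccs: "cc g h = scale (al g h) (dd g h)"
    using cc_psi[of g h] by (simp add: al_def dd_def)
  have c1: "sig g * Uu h = Uu h * sig g" using V0_central[OF H_V0[OF sigH]] by blast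
  have "ww g * ww h = Uu g * (sig g * Uu h) * sig h" by (simp add: ww_def mult.assoc)
  also have "\<dots> = (Uu g * Uu h) * (sig g * sig h)" by (simp add: c1 mult.assoc)
  also have "\<dots> = Uu (g + h) * (scale (al g h) (dd g h) * (sig g * sig h))" by (simp add: cc_eq ccs mult.assoc)
  also have "\<dots> = scale (al g h) (Uu (g + h) * (dd g h * sig g * sig h))"
    by (simp add: sc_multL[symmetric] sc_multR[symmetric] mult.assoc)
  also have "\<dots> = scale (al g h) (ww (g + h))" by (simp add: dd_sig ww_def)
  finally show "ww g * ww h = scale (al g h) (ww (g + h))" .
qed

lemma main_result:
  "\<exists>\<alpha>. two_cocycle \<alpha> \<and> induces \<alpha> \<beta> \<and> (\<exists>\<phi>. graded_iso_tt scale V \<alpha> (V 0) \<phi>) \<and>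
         (jacobson (V 0) = {0} \<longrightarrow> (\<exists>\<phi>. graded_iso_tga scale V \<alpha> \<phi>))"
  using iso_construct[of ww wwi al, OF ww_props(1) ww_props(2) ww_props(3) ww_props(4) ww_props(5) ww_props(6)]
  by (rule exI[of _ al])

end


theorem theorem4p16:
  fixes scale :: "'k::field_char_0 \<Rightarrow> 'a::ring_1 \<Rightarrow> 'a"
    and V :: "'g::{finite,ab_group_add} \<Rightarrow> 'a set"
    and \<beta> :: "'g \<Rightarrow> 'g \<Rightarrow> 'k"
  assumes "alg_closed TYPE('k)"
    and "fin_dim_algebra scale"
    and "regular_grading scale V \<beta>"
    and "minimal_decomposition \<beta>"
    and "local_alg scale (V 0)"
  shows "\<exists>\<alpha>. two_cocycle \<alpha> \<and> induces \<alpha> \<beta> \<and>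
           (jacobson (V 0) \<noteq> {0} \<longrightarrow>
              (let U = {scale c 1 + j | c j. j \<in> jacobson (V 0)} in
                 subalgebra scale U \<and> commutative_set U \<and> local_alg scale U \<and>
                 (\<exists>\<phi>. graded_iso_tt scale V \<alpha> U \<phi>))) \<and>
           (jacobson (V 0) = {0} \<longrightarrow> (\<exists>\<phi>. graded_iso_tga scale V \<alpha> \<phi>))"
proof -
  have fd: "is_algebra scale \<and> (\<exists>B. finite B \<and> module.span scale B = UNIV)"
    using assms(2) unfolding fin_dim_algebra_def .
  obtain B where B: "finite B" "module.span scale B = UNIV"
    using fd[THEN conjunct2] by (elim exE conjE)
  have ia: "vector_space scale \<and> (\<forall>c x y. scale c (x * y) = scale c x * y \<and> scale c (x * y) = x * scale c y)"
    using fd[THEN conjunct1] unfolding is_algebra_def .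
  have alg1: "vector_space scale" using ia by (rule conjunct1)
  have alg23: "\<forall>c x y. scale c (x * y) = scale c x * y \<and> scale c (x * y) = x * scale c y" using ia by (rule conjunct2)
  have alg2: "scale c (x * y) = scale c x * y" for c x y using alg23 by blast
  have alg3: "scale c (x * y) = x * scale c y" for c x y using alg23 by blast
  have rgd: "graded_algebra scale V \<and>
     (\<forall>gs :: 'g list. gs \<noteq> [] \<longrightarrow> (\<exists>as :: 'a list. length as = length gs \<and>
         (\<forall>i<length gs. as ! i \<in> V (gs ! i)) \<and> prod_list as \<noteq> 0)) \<and>
     (\<forall>g h. \<beta> g h \<noteq> 0) \<and>
     (\<forall>g h. \<forall>x\<in>V g. \<forall>y\<in>V h. x * y = scale (\<beta> g h) (y * x))"
    using assms(3) unfolding regular_grading_def .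
  have gad: "is_algebra scale \<and>
     (\<forall>g. module.subspace scale (V g)) \<and>
     (\<forall>a. \<exists>!c :: 'g \<Rightarrow> 'a. (\<forall>g. c g \<in> V g) \<and> a = (\<Sum>g\<in>UNIV. c g)) \<and>
     (\<forall>g h. \<forall>x\<in>V g. \<forall>y\<in>V h. x * y \<in> V (g + h))"
    using rgd[THEN conjunct1] unfolding graded_algebra_def .
  have gr1: "\<forall>g. module.subspace scale (V g)" using gad by (elim conjE)
  have gr2: "\<forall>a. \<exists>!c :: 'g \<Rightarrow> 'a. (\<forall>g. c g \<in> V g) \<and> a = (\<Sum>g\<in>UNIV. c g)" using gad by (elim conjE)
  have gr3: "\<forall>g h. \<forall>x\<in>V g. \<forall>y\<in>V h. x * y \<in> V (g + h)" using gad by (elim conjE)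
  have rg1: "\<forall>gs :: 'g list. gs \<noteq> [] \<longrightarrow> (\<exists>as :: 'a list. length as = length gs \<and>
         (\<forall>i<length gs. as ! i \<in> V (gs ! i)) \<and> prod_list as \<noteq> 0)" using rgd by (elim conjE)
  have rg2: "\<forall>g h. \<forall>x\<in>V g. \<forall>y\<in>V h. x * y = scale (\<beta> g h) (y * x)" using rgd by (elim conjE)
  have lad: "\<exists>\<psi> :: 'a \<Rightarrow> 'k.
     \<psi> ` (V 0) = UNIV \<and> \<psi> 1 = 1 \<and>
     (\<forall>x\<in>V 0. \<forall>y\<in>V 0. \<psi> (x + y) = \<psi> x + \<psi> y \<and> \<psi> (x * y) = \<psi> x * \<psi> y) \<and>
     (\<forall>c. \<forall>x\<in>V 0. \<psi> (scale c x) = c * \<psi> x) \<and>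
     {x\<in>V 0. \<psi> x = 0} = jacobson (V 0)"
    using assms(5) unfolding local_alg_def .
  then obtain \<psi> :: "'a \<Rightarrow> 'k" where "\<psi> ` (V 0) = UNIV \<and> \<psi> 1 = 1 \<and>
     (\<forall>x\<in>V 0. \<forall>y\<in>V 0. \<psi> (x + y) = \<psi> x + \<psi> y \<and> \<psi> (x * y) = \<psi> x * \<psi> y) \<and>
     (\<forall>c. \<forall>x\<in>V 0. \<psi> (scale c x) = c * \<psi> x) \<and>
     {x\<in>V 0. \<psi> x = 0} = jacobson (V 0)" by (elim exE)
  note P = this
  have psi1: "\<psi> 1 = 1" using P by (elim conjE)
  have psi2: "\<forall>x\<in>V 0. \<forall>y\<in>V 0. \<psi> (x + y) = \<psi> x + \<psi> y \<and> \<psi> (x * y) = \<psi> x * \<psi> y" using P by (elim conjE)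
  have psi3: "\<forall>c. \<forall>x\<in>V 0. \<psi> (scale c x) = c * \<psi> x" using P by (elim conjE)
  have psi4: "{x\<in>V 0. \<psi> x = 0} = jacobson (V 0)" using P by (elim conjE)
  note psi = psi1 psi2 psi3 psi4
  have GAi: "GA scale V \<beta> \<psi> B"
  proof (rule GA.intro)
    show "vector_space scale" by (rule alg1)
    show "scale c (x * y) = scale c x * y" for c x y by (rule alg2)
    show "scale c (x * y) = x * scale c y" for c x y by (rule alg3)
    show "finite B" by (rule B(1))
    show "module.span scale B = UNIV" by (rule B(2))
    show "module.subspace scale (V g)" for g using gr1 by blast
    show "\<exists>!c. (\<forall>g. c g \<in> V g) \<and> a = (\<Sum>g\<in>UNIV. c g)" for a using gr2 by blast
    show "x * y \<in> V (g + h)" if "x \<in> V g" "y \<in> V h" for g h x y using gr3 that by blast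
    show "\<exists>as. length as = length gs \<and> (\<forall>i<length gs. as ! i \<in> V (gs ! i)) \<and> prod_list as \<noteq> 0"
      if "gs \<noteq> []" for gs using rg1 that by blast
    show "x * y = scale (\<beta> g h) (y * x)" if "x \<in> V g" "y \<in> V h" for g h x y using rg2 that by blast
    show "\<psi> (x + y) = \<psi> x + \<psi> y" if "x \<in> V 0" "y \<in> V 0" for x y using psi(2) that by blast
    show "\<psi> (x * y) = \<psi> x * \<psi> y" if "x \<in> V 0" "y \<in> V 0" for x y using psi(2) that by blast
    show "\<psi> (scale c x) = c * \<psi> x" if "x \<in> V 0" for c x using psi(3) that by blast
    show "\<psi> 1 = 1" by (rule psi(1))
    show "{x \<in> V 0. \<psi> x = 0} = jacobson (V 0)" by (rule psi(4))
  qed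
  interpret G: GA scale V \<beta> \<psi> B by (rule GAi)
  obtain \<alpha> where \<alpha>: "two_cocycle \<alpha>" "induces \<alpha> \<beta>" "\<exists>\<phi>. graded_iso_tt scale V \<alpha> (V 0) \<phi>"
    "jacobson (V 0) = {0} \<longrightarrow> (\<exists>\<phi>. graded_iso_tga scale V \<alpha> \<phi>)"
    using G.main_result by blast
  have U: "{scale c 1 + j | c j. j \<in> jacobson (V 0)} = V 0" by (rule G.U_eq)
  have main: "two_cocycle \<alpha> \<and> induces \<alpha> \<beta> \<and>
           (jacobson (V 0) \<noteq> {0} \<longrightarrow>
              (subalgebra scale (V 0) \<and> commutative_set (V 0) \<and> local_alg scale (V 0) \<and>
                 (\<exists>\<phi>. graded_iso_tt scale V \<alpha> (V 0) \<phi>))) \<and>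
           (jacobson (V 0) = {0} \<longrightarrow> (\<exists>\<phi>. graded_iso_tga scale V \<alpha> \<phi>))"
  proof (intro conjI impI)
    show "two_cocycle \<alpha>" by (rule \<alpha>(1))
    show "induces \<alpha> \<beta>" by (rule \<alpha>(2))
    show "subalgebra scale (V 0)" by (rule G.V0_subalg)
    show "commutative_set (V 0)" by (rule G.V0_commset)
    show "local_alg scale (V 0)" by (rule assms(5))
    show "\<exists>\<phi>. graded_iso_tt scale V \<alpha> (V 0) \<phi>" by (rule \<alpha>(3))
    show "\<exists>\<phi>. graded_iso_tga scale V \<alpha> \<phi>" if "jacobson (V 0) = {0}" using \<alpha>(4) that by blast
  qed
  show ?thesis
    unfolding Let_def U by (rule exI[of _ \<alpha>]) (rule main)
qed

end
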